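(* Let $(\mathcal{X},\|\cdot\|)$ be a real Banach space, $P$ a probability distribution on a measurable space $\mathcal{E}$, and $Q,P_e:\mathcal{X}\to\mathcal{X}$ with $\|Q(\theta_1)-Q(\theta_2)\|\le\rho\|\theta_1-\theta_2\|$ ($\rho\in[0,1)$, $\theta^\star$ the unique fixed point of $Q$), $\|P_e(\theta_1)-P_e(\theta_2)\|\le L\|\theta_1-\theta_2\|$ for all $e$ ($L\ge0$), and $\mathbb{E}_{e\sim P}[\|P_e(\theta^\star)-\theta^\star\|]\le\sigma$ for some $\sigma\ge0$. Assume $\gamma:=\rho L>0$. Then for every $\theta\in\mathcal{X}$, \[\|\theta-\theta^\star\|\ge\frac{1}{2\rho L}\Big(\mathbb{E}_e[\Omega(\theta;e)]-(1+\rho)\sigma\Big)_+.\] If moreover $\pi:\mathcal{X}\to\mathcal{Z}$ and $\ell:\mathcal{Z}\to\mathbb{R}$ satisfy $\ell(\pi(\theta))-\ell(\pi(\theta^\star))\ge\frac{m_{\mathrm{QG}}}{2}\|\theta-\theta^\star\|^2$ for all $\theta$ with some $m_{\mathrm{QG}}>0$, then for every $\theta\in\mathcal{X}$, \[\ell(\pi(\theta))-\ell(\pi(\theta^\star))\ge\frac{m_{\mathrm{QG}}}{8\rho^2L^2}\Big(\mathbb{E}_e[\Omega(\theta;e)]-(1+\rho)\sigma\Big)_+^2.\]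
   Context: The order-gap is $\Omega(\theta;e):=\|Q(P_e(\theta))-P_e(Q(\theta))\|$, expectation over $e\sim P$; $(x)_+=\max(x,0)$. $\pi$ is a decision map into a set $\mathcal{Z}$ and $\ell$ a loss. *)

theory Defs
  imports "HOL-Probability.Probability"
begin

definition order_gap :: "('x::real_normed_vector \<Rightarrow> 'x) \<Rightarrow> ('e \<Rightarrow> 'x \<Rightarrow> 'x) \<Rightarrow> 'x \<Rightarrow> 'e \<Rightarrow> real" where
  "order_gap Q P \<theta> e = norm (Q (P e \<theta>) - P e (Q \<theta>))"

definition pos_part :: "real \<Rightarrow> real" where
  "pos_part x = max x 0"

end

theory Submission
  imports Defs
begin

theorem proposition4p14:
  fixes M :: "'e measure" and Q :: "'x::banach \<Rightarrow> 'x" and P :: "'e \<Rightarrow> 'x \<Rightarrow> 'x"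
    and \<theta>s :: 'x and \<rho> L \<sigma> :: real
  assumes prob: "prob_space M"
    and rho: "0 \<le> \<rho>" "\<rho> < 1"
    and Q_contr: "\<And>t1 t2. norm (Q t1 - Q t2) \<le> \<rho> * norm (t1 - t2)"
    and Q_fix: "Q \<theta>s = \<theta>s" and fix_unique: "\<And>t. Q t = t \<Longrightarrow> t = \<theta>s"
    and L: "0 \<le> L"
    and P_lip: "\<And>e t1 t2. e \<in> space M \<Longrightarrow> norm (P e t1 - P e t2) \<le> L * norm (t1 - t2)"
    and int_noise: "integrable M (\<lambda>e. norm (P e \<theta>s - \<theta>s))"
    and noise: "(\<integral>e. norm (P e \<theta>s - \<theta>s) \<partial>M) \<le> \<sigma>" and sigma: "0 \<le> \<sigma>"
    and int_gap: "\<And>\<theta>. integrable M (order_gap Q P \<theta>)"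
    and gamma: "\<rho> * L > 0"
  shows "(\<forall>\<theta>. norm (\<theta> - \<theta>s) \<ge>
           1 / (2 * \<rho> * L) * pos_part ((\<integral>e. order_gap Q P \<theta> e \<partial>M) - (1 + \<rho>) * \<sigma>))
    \<and> (\<forall>(\<pi> :: 'x \<Rightarrow> 'z) (loss :: 'z \<Rightarrow> real) mQG.
           mQG > 0 \<longrightarrow>
           (\<forall>t. loss (\<pi> t) - loss (\<pi> \<theta>s) \<ge> mQG / 2 * (norm (t - \<theta>s))\<^sup>2) \<longrightarrow>
          (\<forall>\<theta>.
           loss (\<pi> \<theta>) - loss (\<pi> \<theta>s) \<ge>
             mQG / (8 * \<rho>\<^sup>2 * L\<^sup>2) * (pos_part ((\<integral>e. order_gap Q P \<theta> e \<partial>M) - (1 + \<rho>) * \<sigma>))\<^sup>2))"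
proof -
  interpret prob_space M by (rule prob)
  have key: "\<And>\<theta>. (\<integral>e. order_gap Q P \<theta> e \<partial>M) \<le> 2 * \<rho> * L * norm (\<theta> - \<theta>s) + (1 + \<rho>) * \<sigma>"
  proof -
    fix \<theta>
    define d where "d = norm (\<theta> - \<theta>s)"
    have pw: "order_gap Q P \<theta> e \<le> 2 * \<rho> * L * d + (1 + \<rho>) * norm (P e \<theta>s - \<theta>s)"
      if e: "e \<in> space M" for e
    proof -
      have eq: "Q (P e \<theta>) - P e (Q \<theta>) = (Q (P e \<theta>) - Q (P e \<theta>s)) + (Q (P e \<theta>s) - Q \<theta>s)
          + (\<theta>s - P e \<theta>s) + (P e \<theta>s - P e (Q \<theta>))"
        using Q_fix by simp
      have a: "norm (Q (P e \<theta>) - Q (P e \<theta>s)) \<le> \<rho> * (L * d)"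
        using Q_contr[of "P e \<theta>" "P e \<theta>s"] P_lip[OF e, of \<theta> \<theta>s] rho unfolding d_def
        by (meson mult_left_mono order_trans)
      have b: "norm (Q (P e \<theta>s) - Q \<theta>s) \<le> \<rho> * norm (P e \<theta>s - \<theta>s)"
        using Q_contr by simp
      have c: "norm (\<theta>s - P e \<theta>s) = norm (P e \<theta>s - \<theta>s)" by (simp add: norm_minus_commute)
      have qd: "norm (\<theta>s - Q \<theta>) \<le> \<rho> * d"
        using Q_contr[of \<theta>s \<theta>] Q_fix unfolding d_def by (simp add: norm_minus_commute)
      have dd: "norm (P e \<theta>s - P e (Q \<theta>)) \<le> L * (\<rho> * d)"
        using P_lip[OF e, of \<theta>s "Q \<theta>"] qd L by (meson mult_left_mono order_trans)
      have "norm (Q (P e \<theta>) - P e (Q \<theta>)) \<le> norm (Q (P e \<theta>) - Q (P e \<theta>s)) + norm (Q (P e \<theta>s) - Q \<theta>s)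
          + norm (\<theta>s - P e \<theta>s) + norm (P e \<theta>s - P e (Q \<theta>))"
        unfolding eq by (smt (verit) norm_triangle_ineq)
      then show ?thesis unfolding order_gap_def using a b c dd by (simp add: algebra_simps)
    qed
    have int2: "integrable M (\<lambda>e. 2 * \<rho> * L * d + (1 + \<rho>) * norm (P e \<theta>s - \<theta>s))"
      using int_noise by simp
    have "(\<integral>e. order_gap Q P \<theta> e \<partial>M) \<le> (\<integral>e. 2 * \<rho> * L * d + (1 + \<rho>) * norm (P e \<theta>s - \<theta>s) \<partial>M)"
      by (rule integral_mono[OF int_gap int2]) (use pw in auto)
    also have "\<dots> = 2 * \<rho> * L * d + (1 + \<rho>) * (\<integral>e. norm (P e \<theta>s - \<theta>s) \<partial>M)"
      using int_noise by (simp add: prob_space)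
    also have "\<dots> \<le> 2 * \<rho> * L * d + (1 + \<rho>) * \<sigma>"
      using noise rho by (simp add: mult_left_mono)
    finally show "(\<integral>e. order_gap Q P \<theta> e \<partial>M) \<le> 2 * \<rho> * L * norm (\<theta> - \<theta>s) + (1 + \<rho>) * \<sigma>"
      unfolding d_def .
  qed
  have pp: "0 \<le> pos_part ((\<integral>e. order_gap Q P \<theta> e \<partial>M) - (1 + \<rho>) * \<sigma>) \<and>
      pos_part ((\<integral>e. order_gap Q P \<theta> e \<partial>M) - (1 + \<rho>) * \<sigma>) \<le> 2 * \<rho> * L * norm (\<theta> - \<theta>s)" for \<theta>
    using key[of \<theta>] gamma rho L unfolding pos_part_def by auto
  have A: "norm (\<theta> - \<theta>s) \<ge>
           1 / (2 * \<rho> * L) * pos_part ((\<integral>e. order_gap Q P \<theta> e \<partial>M) - (1 + \<rho>) * \<sigma>)" for \<theta>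
    using pp[of \<theta>] gamma by (simp add: field_simps)
  show ?thesis
  proof (intro conjI allI impI)
    fix \<theta> show "norm (\<theta> - \<theta>s) \<ge>
           1 / (2 * \<rho> * L) * pos_part ((\<integral>e. order_gap Q P \<theta> e \<partial>M) - (1 + \<rho>) * \<sigma>)" by (rule A)
  next
    fix \<pi> :: "'x \<Rightarrow> 'z" and loss :: "'z \<Rightarrow> real" and mQG :: real and \<theta>
    assume m: "mQG > 0" and qg: "\<forall>t. loss (\<pi> t) - loss (\<pi> \<theta>s) \<ge> mQG / 2 * (norm (t - \<theta>s))\<^sup>2"
    define p where "p = pos_part ((\<integral>e. order_gap Q P \<theta> e \<partial>M) - (1 + \<rho>) * \<sigma>)"
    define d where "d = norm (\<theta> - \<theta>s)"
    have p0: "0 \<le> p" and pd: "p \<le> 2 * \<rho> * L * d" using pp[of \<theta>] unfolding p_def d_def by auto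
    have "p\<^sup>2 \<le> (2 * \<rho> * L * d)\<^sup>2" using p0 pd by (simp add: power_mono)
    hence "p\<^sup>2 \<le> 4 * \<rho>\<^sup>2 * L\<^sup>2 * d\<^sup>2" by (simp add: power_mult_distrib)
    have k0: "0 < \<rho>\<^sup>2 * L\<^sup>2" using gamma by (metis power_mult_distrib zero_less_power mult_eq_0_iff less_irrefl)
    have "mQG / (8 * \<rho>\<^sup>2 * L\<^sup>2) * p\<^sup>2 \<le> mQG / (8 * \<rho>\<^sup>2 * L\<^sup>2) * (4 * \<rho>\<^sup>2 * L\<^sup>2 * d\<^sup>2)"
      using \<open>p\<^sup>2 \<le> 4 * \<rho>\<^sup>2 * L\<^sup>2 * d\<^sup>2\<close> m k0 by (intro mult_left_mono) auto
    also have "\<dots> = mQG / 2 * d\<^sup>2" proof -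
      have "\<And>K::real. 0 < K \<Longrightarrow> mQG / (8 * K) * (4 * K * d\<^sup>2) = mQG / 2 * d\<^sup>2"
        by (simp add: field_simps)
      from this[OF k0] show ?thesis by (simp add: mult.assoc)
    qed
    also have "\<dots> \<le> loss (\<pi> \<theta>) - loss (\<pi> \<theta>s)" using qg unfolding d_def by auto
    finally show "loss (\<pi> \<theta>) - loss (\<pi> \<theta>s) \<ge> mQG / (8 * \<rho>\<^sup>2 * L\<^sup>2) * p\<^sup>2" .
  qed
qed

end
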